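(* Let $\mathcal{G}$ be a simple temporal clique and let $\mathcal{T}^-=(V,E^-_T)$ be obtained by the forward construction. Every vertex $v$ that is not an emitter can reach a vertex $v'$ lying in the same in-tree of $\mathcal{T}^-$ as $v$ (emitter or not) by a journey of length at most two whose last edge is $e^-(v')$.
   Context: A simple temporal clique is a pair $\mathcal{G}=(G,\lambda)$ where $G=(V,E)$ is the complete graph on a finite vertex set $V$ and $\lambda:E\to\mathbb{N}$ assigns to each edge a single integer label such that any two distinct edges sharing an endpoint have different labels; the label of an arc $(x,y)$ is $\lambda(\{x,y\})$. A journey from $x$ to $y$ is a sequence of vertices $x=u_0,\dots,u_k=y$ ($k\ge1$) with $\lambda(\{u_{i-1},u_i\})<\lambda(\{u_i,u_{i+1}\})$ for $1\le i<k$; its length is $k$ and its last edge is $\{u_{k-1},u_k\}$. For a vertex $v$, $e^-(v)$ is the edge incident to $v$ with smallest label. Forward construction: let $E^-$ be the set of arcs $(u,v)$ with $\{u,v\}=e^-(v)$, except that if $e^-(u)=e^-(v)=\{u,v\}$ only one of the two arcs $(u,v),(v,u)$ is included (arbitrarily). Initialize $E^-_T:=E^-$. For every vertex $v$ of out-degree at least $2$ in $(V,E^-)$, let $(v,u_1),\dots,(v,u_\ell)$ be its out-arcs in $E^-$, where $(v,u_\ell)$ has the largest label; for each $i<\ell$, if $u_i$ has out-degree $0$ in $(V,E^-)$, replace $(v,u_i)$ by $(u_i,v)$ in $E^-_T$, and otherwise remove $(v,u_i)$ from $E^-_T$. Set $\mathcal{T}^-=(V,E^-_T)$. Its weakly connected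 components are called in-trees; an emitter is a vertex of out-degree $0$ in $\mathcal{T}^-$. *)

theory Defs
  imports Main
begin

definition simple_temporal_clique :: "'v set \<Rightarrow> ('v set \<Rightarrow> nat) \<Rightarrow> bool" where
  "simple_temporal_clique V lam \<longleftrightarrow> finite V \<and>
     (\<forall>x\<in>V. \<forall>y\<in>V. \<forall>z\<in>V. x \<noteq> y \<longrightarrow> x \<noteq> z \<longrightarrow> y \<noteq> z \<longrightarrow> lam {x,y} \<noteq> lam {x,z})"

text \<open>emin V lam v u  means  e^-(v) = {v,u}.\<close>
definition emin :: "'v set \<Rightarrow> ('v set \<Rightarrow> nat) \<Rightarrow> 'v \<Rightarrow> 'v \<Rightarrow> bool" where
  "emin V lam v u \<longleftrightarrow> v \<in> V \<and> u \<in> V \<and> u \<noteq> v \<and>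
     (\<forall>w\<in>V. w \<noteq> v \<longrightarrow> w \<noteq> u \<longrightarrow> lam {v,u} < lam {v,w})"

text \<open>Em is an admissible choice of E^-: all arcs (u,v) with e^-(v) = {u,v}, where for
  mutual minimal edges exactly one of the two arcs is kept (arbitrary choice).\<close>
definition valid_Eminus :: "'v set \<Rightarrow> ('v set \<Rightarrow> nat) \<Rightarrow> ('v \<times> 'v) set \<Rightarrow> bool" where
  "valid_Eminus V lam Em \<longleftrightarrow>
     (\<forall>u v. (u,v) \<in> Em \<longrightarrow> emin V lam v u) \<and>
     (\<forall>u v. emin V lam v u \<longrightarrow> \<not> emin V lam u v \<longrightarrow> (u,v) \<in> Em) \<and>
     (\<forall>u v. emin V lam v u \<longrightarrow> emin V lam u v \<longrightarrow> ((u,v) \<in> Em \<longleftrightarrow> (v,u) \<notin> Em))"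

text \<open>Arcs (v,u) of Em that are not the largest-label out-arc of v (these are exactly the arcs
  (v,u_i), i < l, of vertices v of out-degree at least 2).\<close>
definition nonmax_arcs :: "('v set \<Rightarrow> nat) \<Rightarrow> ('v \<times> 'v) set \<Rightarrow> ('v \<times> 'v) set" where
  "nonmax_arcs lam Em = {(v,u). (v,u) \<in> Em \<and> (\<exists>w. (v,w) \<in> Em \<and> lam {v,u} < lam {v,w})}"

definition forward_ET :: "('v set \<Rightarrow> nat) \<Rightarrow> ('v \<times> 'v) set \<Rightarrow> ('v \<times> 'v) set" where
  "forward_ET lam Em = (Em - nonmax_arcs lam Em) \<union>
     {(u,v). (v,u) \<in> nonmax_arcs lam Em \<and> (\<forall>x. (u,x) \<notin> Em)}"

definition emitter :: "'v set \<Rightarrow> ('v \<times> 'v) set \<Rightarrow> 'v \<Rightarrow> bool" where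
  "emitter V ET v \<longleftrightarrow> v \<in> V \<and> (\<forall>x. (v,x) \<notin> ET)"

text \<open>Same in-tree = same weakly connected component of (V, ET).\<close>
definition same_in_tree :: "'v set \<Rightarrow> ('v \<times> 'v) set \<Rightarrow> 'v \<Rightarrow> 'v \<Rightarrow> bool" where
  "same_in_tree V ET x y \<longleftrightarrow> x \<in> V \<and> y \<in> V \<and> (x,y) \<in> (ET \<union> ET\<inverse>)\<^sup>*"

text \<open>A journey given as its vertex sequence u_0,...,u_k (k \<ge> 1); its length is k = length p - 1.\<close>
definition journey :: "'v set \<Rightarrow> ('v set \<Rightarrow> nat) \<Rightarrow> 'v list \<Rightarrow> bool" where
  "journey V lam p \<longleftrightarrow> length p \<ge> 2 \<and> set p \<subseteq> V \<and>
     (\<forall>i. Suc i < length p \<longrightarrow> p ! i \<noteq> p ! Suc i) \<and>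
     (\<forall>i. i + 2 < length p \<longrightarrow> lam {p ! i, p ! (i+1)} < lam {p ! (i+1), p ! (i+2)})"

end

theory Submission
  imports Defs
begin

theorem lemma4:
  fixes V :: "'v set" and lam :: "'v set \<Rightarrow> nat" and Em :: "('v \<times> 'v) set"
  assumes "simple_temporal_clique V lam"
    and "valid_Eminus V lam Em"
    and "v \<in> V"
    and "\<not> emitter V (forward_ET lam Em) v"
  shows "\<exists>v' p. same_in_tree V (forward_ET lam Em) v v' \<and>
           journey V lam p \<and> hd p = v \<and> last p = v' \<and> length p \<le> 3 \<and>
           emin V lam v' (p ! (length p - 2))"
proof -
  have finV: "finite V" using assms(1) unfolding simple_temporal_clique_def by blast
  have EmD: "\<And>a b. (a,b) \<in> Em \<Longrightarrow> emin V lam b a"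
    using assms(2) unfolding valid_Eminus_def by blast
  obtain x where vx: "(v,x) \<in> forward_ET lam Em"
    using assms(3,4) unfolding emitter_def by blast
  show ?thesis
  proof (cases "(v,x) \<in> Em - nonmax_arcs lam Em")
    case True
    then have e: "emin V lam x v" using EmD by blast
    have st: "same_in_tree V (forward_ET lam Em) v x"
      unfolding same_in_tree_def using e vx assms(3) unfolding emin_def by blast
    have j: "journey V lam [v,x]"
      unfolding journey_def using e assms(3) unfolding emin_def by auto
    show ?thesis
      apply (rule exI[of _ x], rule exI[of _ "[v,x]"])
      using st j e by simp
  next
    case False
    then have nm: "(x,v) \<in> nonmax_arcs lam Em"
      using vx unfolding forward_ET_def by blast
    then have xv: "(x,v) \<in> Em" and "\<exists>w. (x,w) \<in> Em \<and> lam {x,v} < lam {x,w}"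
      unfolding nonmax_arcs_def by auto
    define S where "S = {w. (x,w) \<in> Em}"
    have SV: "S \<subseteq> V" unfolding S_def using EmD unfolding emin_def by blast
    have finS: "finite S" using SV finV finite_subset by blast
    have Sne: "S \<noteq> {}" using xv S_def by blast
    define M where "M = Max ((\<lambda>w. lam {x,w}) ` S)"
    have "M \<in> (\<lambda>w. lam {x,w}) ` S" unfolding M_def using finS Sne by simp
    then obtain w where wS: "w \<in> S" and wM: "lam {x,w} = M" by blast
    have maxw: "\<And>w'. w' \<in> S \<Longrightarrow> lam {x,w'} \<le> lam {x,w}"
      using wM finS unfolding M_def by simp
    have xw: "(x,w) \<in> Em" using wS S_def by simp
    have vlt: "lam {x,v} < lam {x,w}"
      using \<open>\<exists>w. (x,w) \<in> Em \<and> lam {x,v} < lam {x,w}\<close> maxw S_def by fastforce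
    have xwET: "(x,w) \<in> forward_ET lam Em"
      unfolding forward_ET_def nonmax_arcs_def using xw maxw S_def by fastforce
    have ew: "emin V lam w x" using EmD xw by blast
    have ev: "emin V lam v x" using EmD xv by blast
    have wv: "w \<noteq> v" using vlt by auto
    have st: "same_in_tree V (forward_ET lam Em) v w"
    proof -
      have "(v,x) \<in> (forward_ET lam Em \<union> (forward_ET lam Em)\<inverse>)\<^sup>*" using vx by blast
      moreover have "(x,w) \<in> (forward_ET lam Em \<union> (forward_ET lam Em)\<inverse>)\<^sup>*" using xwET by blast
      ultimately show ?thesis unfolding same_in_tree_def using ew assms(3)
        unfolding emin_def by (meson rtrancl_trans)
    qed
    have j: "journey V lam [v,x,w]"
      unfolding journey_def using ew ev vlt assms(3) unfolding emin_def
      apply (auto simp: insert_commute)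
      using less_Suc_eq nth_Cons_Suc by (auto simp: less_Suc_eq nth_Cons' insert_commute)
    show ?thesis
      apply (rule exI[of _ w], rule exI[of _ "[v,x,w]"])
      using st j ew by simp
  qed
qed

end
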